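(* Let $R$ be a ring which is $2$-primal, local, and strongly weakly nil-clean. Then the $2\times 2$ matrix ring ${\rm M}_2(R)$ is a GSWNC ring.
   Context: All rings are associative with identity. An element $a$ of a ring $S$ is called strongly weakly nil-clean if there exist an idempotent $e \in S$ and a nilpotent $q \in S$ with $eq = qe$ such that $a = q + e$ or $a = q - e$. A ring is strongly weakly nil-clean if all its elements are strongly weakly nil-clean. A ring $S$ is called GSWNC if every non-invertible element of $S$ is strongly weakly nil-clean. A ring is $2$-primal if its prime radical (the intersection of all prime ideals) equals its set of nilpotent elements. *)

theory Defs
  imports Main
begin

definition idempotent :: "'a::ring_1 \<Rightarrow> bool" where
  "idempotent e \<longleftrightarrow> e * e = e"

definition nilpotent :: "'a::ring_1 \<Rightarrow> bool" where
  "nilpotent q \<longleftrightarrow> (\<exists>n::nat. q ^ n = 0)"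

definition invertible :: "'a::ring_1 \<Rightarrow> bool" where
  "invertible a \<longleftrightarrow> (\<exists>b. a * b = 1 \<and> b * a = 1)"

definition swnc_elem :: "'a::ring_1 \<Rightarrow> bool" where
  "swnc_elem a \<longleftrightarrow> (\<exists>e q. idempotent e \<and> nilpotent q \<and> e * q = q * e \<and>
                               (a = q + e \<or> a = q - e))"

definition swnc_ring :: "'a::ring_1 itself \<Rightarrow> bool" where
  "swnc_ring _ \<longleftrightarrow> (\<forall>a::'a. swnc_elem a)"

definition gswnc_ring :: "'a::ring_1 itself \<Rightarrow> bool" where
  "gswnc_ring _ \<longleftrightarrow> (\<forall>a::'a. \<not> invertible a \<longrightarrow> swnc_elem a)"

definition two_sided_ideal :: "'a::ring_1 set \<Rightarrow> bool" where
  "two_sided_ideal I \<longleftrightarrow> 0 \<in> I \<and> (\<forall>x\<in>I. \<forall>y\<in>I. x + y \<in> I) \<and> (\<forall>x\<in>I. - x \<in> I) \<and>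
     (\<forall>x\<in>I. \<forall>r. r * x \<in> I \<and> x * r \<in> I)"

definition prime_ideal :: "'a::ring_1 set \<Rightarrow> bool" where
  "prime_ideal P \<longleftrightarrow> two_sided_ideal P \<and> P \<noteq> UNIV \<and>
     (\<forall>A B. two_sided_ideal A \<and> two_sided_ideal B \<and> (\<forall>a\<in>A. \<forall>b\<in>B. a * b \<in> P)
            \<longrightarrow> A \<subseteq> P \<or> B \<subseteq> P)"

definition prime_radical :: "'a::ring_1 itself \<Rightarrow> 'a set" where
  "prime_radical _ = \<Inter> {P. prime_ideal P}"

definition two_primal :: "'a::ring_1 itself \<Rightarrow> bool" where
  "two_primal T \<longleftrightarrow> prime_radical T = {q. nilpotent q}"

definition local_ring :: "'a::ring_1 itself \<Rightarrow> bool" where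
  "local_ring _ \<longleftrightarrow> (0::'a) \<noteq> 1 \<and> two_sided_ideal {a::'a. \<not> invertible a}"

datatype 'a m2 = M2 (e11: 'a) (e12: 'a) (e21: 'a) (e22: 'a)

instantiation m2 :: (ring_1) ring_1
begin

definition "0 = M2 0 0 0 0"
definition "1 = M2 1 0 0 1"
definition "A + B = M2 (e11 A + e11 B) (e12 A + e12 B) (e21 A + e21 B) (e22 A + e22 B)"
definition "A - B = M2 (e11 A - e11 B) (e12 A - e12 B) (e21 A - e21 B) (e22 A - e22 B)"
definition "- A = M2 (- e11 A) (- e12 A) (- e21 A) (- e22 A)"
definition "A * B = M2 (e11 A * e11 B + e12 A * e21 B) (e11 A * e12 B + e12 A * e22 B)
                       (e21 A * e11 B + e22 A * e21 B) (e21 A * e12 B + e22 A * e22 B)"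

instance
proof
  fix a b c :: "'a m2"
  show "a * b * c = a * (b * c)"
    by (cases a; cases b; cases c) (simp add: times_m2_def algebra_simps)
  show "a + b + c = a + (b + c)"
    by (simp add: plus_m2_def algebra_simps)
  show "a + b = b + a"
    by (simp add: plus_m2_def algebra_simps)
  show "0 + a = a"
    by (cases a) (simp add: plus_m2_def zero_m2_def)
  show "- a + a = 0"
    by (cases a) (simp add: plus_m2_def uminus_m2_def zero_m2_def)
  show "a - b = a + - b"
    by (simp add: plus_m2_def uminus_m2_def minus_m2_def)
  show "(a + b) * c = a * c + b * c"
    by (simp add: plus_m2_def times_m2_def algebra_simps)
  show "a * (b + c) = a * b + a * c"
    by (simp add: plus_m2_def times_m2_def algebra_simps)
  show "1 * a = a"
    by (cases a) (simp add: one_m2_def times_m2_def)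
  show "a * 1 = a"
    by (cases a) (simp add: one_m2_def times_m2_def)
  show "(0::'a m2) \<noteq> 1"
    by (simp add: zero_m2_def one_m2_def)
qed

end

end

theory Submission
  imports Defs
begin


lemma geom_left: "(1 - x) * (\<Sum>i<n. x^i) = (1::'a::ring_1) - x^n"
proof (induction n)
  case (Suc n)
  have "(1 - x) * (\<Sum>i<Suc n. x^i) = (1 - x) * (\<Sum>i<n. x^i) + (x^n - x * x^n)"
    by (simp add: algebra_simps)
  then show ?case using Suc by simp
qed simp

lemma geom_right: "(\<Sum>i<n. x^i) * (1 - x) = (1::'a::ring_1) - x^n"
proof (induction n)
  case (Suc n)
  have "(\<Sum>i<Suc n. x^i) * (1 - x) = (\<Sum>i<n. x^i) * (1 - x) + (x^n - x^n * x)"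
    by (simp add: algebra_simps)
  then show ?case using Suc by (simp add: power_commutes)
qed simp

lemma nil_one_minus_inv:
  fixes x :: "'a::ring_1"
  assumes "nilpotent x" shows "invertible (1 - x)"
proof -
  obtain n where "x^n = 0" using assms by (auto simp: nilpotent_def)
  then show ?thesis unfolding invertible_def
    using geom_left[of x n] geom_right[of x n] by auto
qed

lemma nil_one_plus_inv:
  fixes x :: "'a::ring_1"
  assumes "nilpotent x" shows "invertible (1 + x)"
proof -
  have "nilpotent (- x)" using assms unfolding nilpotent_def
    by (metis power_minus mult_zero_right)
  then show ?thesis using nil_one_minus_inv[of "-x"] by simp
qed

lemma inv_neg: "invertible (x::'a::ring_1) \<Longrightarrow> invertible (- x)"
  unfolding invertible_def by (metis minus_mult_minus)

lemma lr_inv: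
  fixes a :: "'a::ring_1"
  assumes "invertible (a * b)" "invertible (b * a)" shows "invertible a"
proof -
  obtain u where u: "a * b * u = 1" using assms(1) by (auto simp: invertible_def)
  obtain v where v: "v * (b * a) = 1" using assms(2) by (auto simp: invertible_def)
  have "v * b = v * b * (a * (b * u))" using u by (simp add: mult.assoc)
  also have "\<dots> = (v * (b * a)) * (b * u)" by (simp add: mult.assoc)
  finally have "v * b = b * u" using v by simp
  then show ?thesis unfolding invertible_def using u v
    by (metis mult.assoc)
qed

lemma power_commute_mult:
  fixes x :: "'a::ring_1"
  assumes "x * y = y * x" shows "(x * y)^m = x^m * y^m"
proof (induction m)
  case (Suc m)
  have c: "y * x^m = x^m * y" using assms
    by (metis power_commutes power_commuting_commutes) 
  have "(x*y)^Suc m = x * y * (x^m * y^m)" using Suc by simp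
  also have "\<dots> = x * (y * x^m) * y^m" by (simp add: mult.assoc)
  also have "\<dots> = x^Suc m * y^Suc m" using c by (simp add: mult.assoc)
  finally show ?case .
qed simp

lemma power_inverse_one: "(a::'a::ring_1) * b = 1 \<Longrightarrow> a^n * b^n = 1"
proof (induction n)
  case (Suc n)
  have "a^Suc n * b^Suc n = a * (a^n * b^n) * b"
    by (metis power_Suc power_Suc2 mult.assoc)
  then show ?case using Suc by simp
qed simp

lemma nil_not_inv:
  fixes x :: "'a::ring_1"
  assumes "nilpotent x" "(0::'a) \<noteq> 1" shows "\<not> invertible x"
  using assms power_inverse_one unfolding nilpotent_def invertible_def
  by (metis mult_zero_left)



definition dc :: "'a::ring_1 \<Rightarrow> 'a set" where
  "dc a = {y. \<forall>z. z * a = a * z \<longrightarrow> z * y = y * z}"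

lemma dc_a: "a \<in> dc a" by (simp add: dc_def)
lemma dc_one: "1 \<in> dc a" by (simp add: dc_def)
lemma dc_add: "y \<in> dc a \<Longrightarrow> z \<in> dc a \<Longrightarrow> y + z \<in> dc a"
  by (simp add: dc_def algebra_simps)
lemma dc_diff: "y \<in> dc a \<Longrightarrow> z \<in> dc a \<Longrightarrow> y - z \<in> dc a"
  by (simp add: dc_def algebra_simps)
lemma dc_mult: "y \<in> dc a \<Longrightarrow> z \<in> dc a \<Longrightarrow> y * z \<in> dc a"
  unfolding dc_def
proof (intro CollectI allI impI)
  fix w assume y: "y \<in> {y. \<forall>z. z * a = a * z \<longrightarrow> z * y = y * z}"
    and z: "z \<in> {y. \<forall>z. z * a = a * z \<longrightarrow> z * y = y * z}" and w: "w * a = a * w"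
  have 1: "w * y = y * w" using y w by blast
  have 2: "w * z = z * w" using z w by blast
  have "w * (y * z) = (w * y) * z" by (simp add: mult.assoc)
  also have "\<dots> = y * (w * z)" using 1 by (simp add: mult.assoc)
  also have "\<dots> = (y * z) * w" using 2 by (simp add: mult.assoc)
  finally show "w * (y * z) = y * z * w" .
qed
lemma dc_comm: "y \<in> dc a \<Longrightarrow> z \<in> dc a \<Longrightarrow> y * z = z * y"
proof -
  assume y: "y \<in> dc a" and z: "z \<in> dc a"
  have "y * a = a * y" using y by (simp add: dc_def)
  then show ?thesis using z by (simp add: dc_def)
qed
lemma dc_comm_a: "y \<in> dc a \<Longrightarrow> y * a = a * y"
  unfolding dc_def by auto

lemmas dc_intros = dc_a dc_one dc_add dc_diff dc_mult

definition fstep :: "'a::ring_1 \<Rightarrow> 'a" where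
  "fstep e = e*e + e*e + e*e - e*(e*e) - e*(e*e)"

definition wfac :: "'a::ring_1 \<Rightarrow> 'a" where
  "wfac e = e*e+e*e+e*e+e*e - e - e - e - e - 1 - 1 - 1"

lemma fstep_id:
  fixes e :: "'a::ring_1"
  shows "fstep e * fstep e - fstep e = ((e * e - e) * (e * e - e)) * wfac e"
  unfolding fstep_def wfac_def by (simp add: algebra_simps)

lemma fstep_diff:
  fixes e :: "'a::ring_1"
  shows "fstep e - e = (e * e - e) * (1 - e - e)"
  unfolding fstep_def by (simp add: algebra_simps)

lemma lift_idem:
  fixes a :: "'a::ring_1"
  assumes "nilpotent (a * a - a)"
  shows "\<exists>e. idempotent e \<and> nilpotent (a - e) \<and> e * a = a * e"
proof -
  define x0 where "x0 = a * a - a"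
  have x0P: "x0 \<in> dc a" unfolding x0_def by (intro dc_intros)
  define ee where "ee k = (fstep ^^ k) a" for k
  define xx where "xx k = ee k * ee k - ee k" for k
  have inv: "ee k \<in> dc a \<and> (\<exists>r\<in>dc a. xx k = x0 * r) \<and> (\<exists>p\<in>dc a. ee k - a = x0 * p)" for k
  proof (induction k)
    case 0
    have "xx 0 = x0 * 1" by (simp add: xx_def ee_def x0_def)
    moreover have "ee 0 - a = x0 * 0" by (simp add: ee_def)
    moreover have "(0::'a) \<in> dc a" by (simp add: dc_def)
    moreover have "ee 0 \<in> dc a" by (simp add: ee_def dc_a)
    ultimately show ?case using dc_one by blast
  next
    case (Suc k)
    then obtain r p where e: "ee k \<in> dc a" and r: "r \<in> dc a" "xx k = x0 * r"
      and p: "p \<in> dc a" "ee k - a = x0 * p" by blast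
    have eS: "ee (Suc k) = fstep (ee k)" by (simp add: ee_def)
    have fP: "fstep (ee k) \<in> dc a" unfolding fstep_def using e by (intro dc_intros)
    have wP: "wfac (ee k) \<in> dc a" unfolding wfac_def using e by (intro dc_intros)
    have xP: "xx k \<in> dc a" unfolding xx_def using e by (intro dc_intros)
    have "xx (Suc k) = (xx k * xx k) * wfac (ee k)"
      using fstep_id[of "ee k"] by (simp add: xx_def eS)
    also have "\<dots> = x0 * (r * xx k * wfac (ee k))" using r by (simp add: mult.assoc)
    finally have 1: "xx (Suc k) = x0 * (r * xx k * wfac (ee k))" .
    have "ee (Suc k) - a = (fstep (ee k) - ee k) + (ee k - a)" by (simp add: eS)
    also have "\<dots> = x0 * (r * (1 - ee k - ee k) + p)"
      using fstep_diff[of "ee k"] r p by (simp add: xx_def distrib_left mult.assoc)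
    finally have 2: "ee (Suc k) - a = x0 * (r * (1 - ee k - ee k) + p)" .
    have r': "r * xx k * wfac (ee k) \<in> dc a" using r(1) xP wP by (intro dc_mult)
    have p': "r * (1 - ee k - ee k) + p \<in> dc a" using r(1) p(1) e by (intro dc_intros)
    have "ee (Suc k) \<in> dc a" using fP eS by simp
    then show ?case using 1 2 r' p' by blast
  qed
  have nil: "\<forall>m. x0^(m * 2^k) = 0 \<longrightarrow> xx k ^ m = 0" for k
  proof (induction k)
    case 0 then show ?case by (simp add: xx_def ee_def x0_def)
  next
    case (Suc k)
    show ?case
    proof (intro allI impI)
      fix m assume h: "x0 ^ (m * 2 ^ Suc k) = 0"
      have "x0 ^ ((2*m) * 2^k) = 0" using h by (simp add: mult.assoc mult.commute)
      then have z: "xx k ^ (2*m) = 0" using Suc by blast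
      have e: "ee k \<in> dc a" using inv by blast
      have wP: "wfac (ee k) \<in> dc a" unfolding wfac_def using e by (intro dc_intros)
      have xP: "xx k \<in> dc a" unfolding xx_def using e by (intro dc_intros)
      have eS: "ee (Suc k) = fstep (ee k)" by (simp add: ee_def)
      have "xx (Suc k) = (xx k * xx k) * wfac (ee k)"
        using fstep_id[of "ee k"] by (simp add: xx_def eS)
      then have "xx (Suc k) ^ m = (xx k * xx k)^m * wfac (ee k) ^ m"
        using power_commute_mult[of "xx k * xx k" "wfac (ee k)" m] xP wP
        by (metis dc_comm dc_mult)
      also have "(xx k * xx k)^m = xx k ^ (2*m)"
        by (simp add: power_mult power2_eq_square)
      finally show "xx (Suc k) ^ m = 0" using z by simp
    qed
  qed
  obtain n where n: "x0 ^ n = 0" using assms by (auto simp: nilpotent_def x0_def)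
  have "n \<le> 2^n" using less_exp[of n] by simp
  then have "x0 ^ (1 * 2^n) = 0" using n
    by (metis mult_1 le_add_diff_inverse power_add mult_zero_left)
  then have "xx n ^ 1 = 0" using nil by blast
  then have idem: "idempotent (ee n)" by (simp add: xx_def idempotent_def)
  obtain p where p: "p \<in> dc a" "ee n - a = x0 * p" using inv by blast
  have "(x0 * p)^n = x0^n * p^n" using power_commute_mult dc_comm[OF x0P p(1)] by blast
  then have "nilpotent (ee n - a)" using p n by (auto simp: nilpotent_def)
  then have "nilpotent (a - ee n)" unfolding nilpotent_def
    by (metis minus_diff_eq power_minus mult_zero_right)
  moreover have "ee n * a = a * ee n" using inv dc_comm_a by blast
  ultimately show ?thesis using idem by blast
qed



definition bad :: "'a::ring_1 set \<Rightarrow> 'a set \<Rightarrow> bool" where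
  "bad S I \<longleftrightarrow> (\<forall>n. \<exists>w. length w = n \<and> set w \<subseteq> S \<and> prod_list w \<notin> I)"

lemma chain_finite_bound:
  assumes "finite T" "C \<noteq> {}" "subset.chain F C" "\<forall>t\<in>T. \<exists>I\<in>C. t \<in> I"
  shows "\<exists>I\<in>C. T \<subseteq> I"
  using assms
proof (induction T rule: finite_induct)
  case empty then show ?case by blast
next
  case (insert t T)
  then obtain I1 where I1: "I1 \<in> C" "T \<subseteq> I1" by blast
  obtain I2 where I2: "I2 \<in> C" "t \<in> I2" using insert.prems by blast
  have "I1 \<subseteq> I2 \<or> I2 \<subseteq> I1" using insert.prems(2) I1(1) I2(1)
    by (auto simp: subset.chain_def)
  then show ?case using I1 I2 by blast
qed

lemma words_finite: "finite S \<Longrightarrow> finite ((\<lambda>w. prod_list w) ` {w. set w \<subseteq> S \<and> length w = n})"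
  using finite_lists_length_eq by blast

lemma ideal_union_chain:
  assumes "C \<noteq> {}" "subset.chain {I. two_sided_ideal I} C"
  shows "two_sided_ideal (\<Union>C)"
proof -
  have ch: "\<forall>I\<in>C. two_sided_ideal I" and lin: "\<forall>I\<in>C. \<forall>K\<in>C. I \<subseteq> K \<or> K \<subseteq> I"
    using assms(2) by (auto simp: subset.chain_def)
  show ?thesis unfolding two_sided_ideal_def
  proof (intro conjI ballI allI)
    show "0 \<in> \<Union>C" using assms(1) ch by (auto simp: two_sided_ideal_def)
  next
    fix x y assume "x \<in> \<Union>C" "y \<in> \<Union>C"
    then obtain I K where "I \<in> C" "K \<in> C" "x \<in> I" "y \<in> K" by blast
    then show "x + y \<in> \<Union>C" using lin ch unfolding two_sided_ideal_def
      by (metis UnionI subsetD)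
  next
    fix x assume "x \<in> \<Union>C" then show "- x \<in> \<Union>C" using ch
      by (auto simp: two_sided_ideal_def)
  next
    fix x r assume "x \<in> \<Union>C"
    then obtain I where "I \<in> C" "x \<in> I" by blast
    then have "r * x \<in> I" "x * r \<in> I" using ch by (auto simp: two_sided_ideal_def)
    then show "r * x \<in> \<Union>C" "x * r \<in> \<Union>C" using \<open>I \<in> C\<close> by blast+
  qed
qed

lemma sum_ideal:
  assumes "two_sided_ideal P" "two_sided_ideal A"
  shows "two_sided_ideal {p + a | p a. p \<in> P \<and> a \<in> A}"
  using assms unfolding two_sided_ideal_def
proof (intro conjI ballI allI)
  show "0 \<in> {p + a |p a. p \<in> P \<and> a \<in> A}" using assms by (auto simp: two_sided_ideal_def intro!: exI[of _ 0])
next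
  fix x y assume "x \<in> {p + a |p a. p \<in> P \<and> a \<in> A}" "y \<in> {p + a |p a. p \<in> P \<and> a \<in> A}"
  then obtain p a p' a' where "x = p + a" "y = p' + a'" "p \<in> P" "a \<in> A" "p' \<in> P" "a' \<in> A" by blast
  moreover have "x + y = (p + p') + (a + a')" using \<open>x = p + a\<close> \<open>y = p' + a'\<close>
    by (simp add: algebra_simps)
  moreover have "p + p' \<in> P" "a + a' \<in> A" using assms \<open>p \<in> P\<close> \<open>a \<in> A\<close> \<open>p' \<in> P\<close> \<open>a' \<in> A\<close>
    unfolding two_sided_ideal_def by auto
  ultimately show "x + y \<in> {p + a |p a. p \<in> P \<and> a \<in> A}" by blast
next
  fix x assume "x \<in> {p + a |p a. p \<in> P \<and> a \<in> A}"
  then obtain p a where "x = p + a" "p \<in> P" "a \<in> A" by blast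
  moreover have "- x = (- p) + (- a)" using \<open>x = p + a\<close> by (simp add: algebra_simps)
  moreover have "- p \<in> P" "- a \<in> A" using assms \<open>p \<in> P\<close> \<open>a \<in> A\<close>
    unfolding two_sided_ideal_def by auto
  ultimately show "- x \<in> {p + a |p a. p \<in> P \<and> a \<in> A}" by blast
next
  fix x r assume "x \<in> {p + a |p a. p \<in> P \<and> a \<in> A}"
  then obtain p a where "x = p + a" "p \<in> P" "a \<in> A" by blast
  moreover have "r * x = r * p + r * a" "x * r = p * r + a * r" using \<open>x = p + a\<close>
    by (simp_all add: algebra_simps)
  moreover have "r * p \<in> P" "r * a \<in> A" "p * r \<in> P" "a * r \<in> A" using assms \<open>p \<in> P\<close> \<open>a \<in> A\<close>
    unfolding two_sided_ideal_def by auto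
  ultimately show "r * x \<in> {p + a |p a. p \<in> P \<and> a \<in> A}" "x * r \<in> {p + a |p a. p \<in> P \<and> a \<in> A}"
    by blast+
qed

lemma two_primal_words:
  fixes S :: "'a::ring_1 set"
  assumes tp: "two_primal TYPE('a)" and fin: "finite S" and SJ: "S \<subseteq> {x. nilpotent x}"
  shows "\<exists>n. \<forall>w. length w = n \<and> set w \<subseteq> S \<longrightarrow> prod_list w = 0"
proof (rule ccontr)
  assume H: "\<not> ?thesis"
  define F where "F = {I. two_sided_ideal I \<and> bad S I}"
  have "{0} \<in> F" using H unfolding F_def bad_def two_sided_ideal_def by auto
  then have Fne: "F \<noteq> {}" by blast
  have "\<exists>M\<in>F. \<forall>X\<in>F. M \<subseteq> X \<longrightarrow> X = M"
  proof (rule subset_Zorn_nonempty[OF Fne])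
    fix C assume Cne: "C \<noteq> {}" and ch: "subset.chain F C"
    have ch': "subset.chain {I. two_sided_ideal I} C" using ch
      by (auto simp: subset.chain_def F_def)
    have "bad S (\<Union>C)" unfolding bad_def
    proof
      fix n
      show "\<exists>w. length w = n \<and> set w \<subseteq> S \<and> prod_list w \<notin> \<Union>C"
      proof (rule ccontr)
        assume "\<not> ?thesis"
        then have all: "\<forall>t\<in>prod_list ` {w. set w \<subseteq> S \<and> length w = n}. \<exists>I\<in>C. t \<in> I" by blast
        obtain I where I: "I \<in> C" "prod_list ` {w. set w \<subseteq> S \<and> length w = n} \<subseteq> I"
          using chain_finite_bound[OF words_finite[OF fin] Cne ch all] by blast
        have "bad S I" using I(1) ch by (auto simp: subset.chain_def F_def)
        then show False using I(2) unfolding bad_def by blast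
      qed
    qed
    then show "\<Union>C \<in> F" using ideal_union_chain[OF Cne ch'] by (simp add: F_def)
  qed
  then obtain P where PF: "P \<in> F" and Pmax: "\<forall>X\<in>F. P \<subseteq> X \<longrightarrow> X = P" by blast
  have Pid: "two_sided_ideal P" and Pbad: "bad S P" using PF by (auto simp: F_def)
  have ext: "\<exists>m. \<forall>w. length w = m \<and> set w \<subseteq> S \<longrightarrow> prod_list w \<in> {p + a | p a. p \<in> P \<and> a \<in> A}"
    if A: "two_sided_ideal A" "\<not> A \<subseteq> P" for A
  proof -
    let ?PA = "{p + a | p a. p \<in> P \<and> a \<in> A}"
    have id: "two_sided_ideal ?PA" using sum_ideal[OF Pid A(1)] .
    have sub: "P \<subseteq> ?PA"
    proof
      fix x assume "x \<in> P"
      moreover have "x = x + 0" "(0::'a) \<in> A" using A(1) by (auto simp: two_sided_ideal_def)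
      ultimately show "x \<in> ?PA" by blast
    qed
    have "A \<subseteq> ?PA"
    proof
      fix x assume "x \<in> A"
      moreover have "x = 0 + x" "(0::'a) \<in> P" using Pid by (auto simp: two_sided_ideal_def)
      ultimately show "x \<in> ?PA" by blast
    qed
    then have "?PA \<noteq> P" using A(2) by blast
    then have "?PA \<notin> F" using Pmax sub by blast
    then have "\<not> bad S ?PA" using id by (simp add: F_def)
    then show ?thesis unfolding bad_def by blast
  qed
  have prime: "prime_ideal P"
    unfolding prime_ideal_def
  proof (intro conjI allI impI)
    show "two_sided_ideal P" by (rule Pid)
    show "P \<noteq> UNIV" using Pbad unfolding bad_def by blast
  next
    fix A B assume h: "two_sided_ideal A \<and> two_sided_ideal B \<and> (\<forall>a\<in>A. \<forall>b\<in>B. a * b \<in> P)"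
    show "A \<subseteq> P \<or> B \<subseteq> P"
    proof (rule ccontr)
      assume "\<not> (A \<subseteq> P \<or> B \<subseteq> P)"
      then obtain m k where
        m: "\<forall>w. length w = m \<and> set w \<subseteq> S \<longrightarrow> prod_list w \<in> {p + a | p a. p \<in> P \<and> a \<in> A}" and
        k: "\<forall>w. length w = k \<and> set w \<subseteq> S \<longrightarrow> prod_list w \<in> {p + a | p a. p \<in> P \<and> a \<in> B}"
        using ext h by meson
      obtain w where w: "length w = m + k" "set w \<subseteq> S" "prod_list w \<notin> P"
        using Pbad unfolding bad_def by blast
      have "w = take m w @ drop m w" by simp
      then have pw: "prod_list w = prod_list (take m w) * prod_list (drop m w)"
        by (metis prod_list.append)
      obtain p a where pa: "prod_list (take m w) = p + a" "p \<in> P" "a \<in> A"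
        using m w(1,2) set_take_subset[of m w] by (auto dest!: spec[of _ "take m w"])
      obtain p' b where pb: "prod_list (drop m w) = p' + b" "p' \<in> P" "b \<in> B"
        using k w(1,2) set_drop_subset[of m w] by (auto dest!: spec[of _ "drop m w"])
      have "(p + a) * (p' + b) = p * (p' + b) + a * p' + a * b" by (simp add: algebra_simps)
      moreover have "p * (p' + b) \<in> P" "a * p' \<in> P" "a * b \<in> P"
        using Pid pa pb h unfolding two_sided_ideal_def by auto
      ultimately have "(p + a) * (p' + b) \<in> P" using Pid unfolding two_sided_ideal_def by metis
      then show False using w(3) pw pa pb by simp
    qed
  qed
  have "{x::'a. nilpotent x} \<subseteq> P" using tp prime
    unfolding two_primal_def prime_radical_def by blast
  then have "S \<subseteq> P" using SJ by blast
  moreover obtain w where "length w = 1" "set w \<subseteq> S" "prod_list w \<notin> P"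
    using Pbad unfolding bad_def by blast
  ultimately show False by (cases w) auto
qed



inductive_set W :: "'a::ring_1 set \<Rightarrow> nat \<Rightarrow> 'a set" for S k where
  W0: "0 \<in> W S k"
| Wadd: "x \<in> W S k \<Longrightarrow> y \<in> W S k \<Longrightarrow> x + y \<in> W S k"
| Wword: "length w = k \<Longrightarrow> set w \<subseteq> S \<Longrightarrow> prod_list w \<in> W S k"

lemma W_mult: "x \<in> W S k \<Longrightarrow> s \<in> S \<Longrightarrow> s * x \<in> W S (Suc k)"
proof (induction x rule: W.induct)
  case W0 then show ?case by (simp add: W.W0)
next
  case (Wadd x y) then show ?case by (simp add: distrib_left W.Wadd)
next
  case (Wword w)
  then have "prod_list (s # w) \<in> W S (Suc k)" by (intro W.Wword) auto
  then show ?case by simp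
qed

lemma W_zero: "x \<in> W S n \<Longrightarrow> (\<forall>w. length w = n \<and> set w \<subseteq> S \<longrightarrow> prod_list w = 0) \<Longrightarrow> x = 0"
  by (induction x rule: W.induct) auto

lemma e_mult:
  "e11 (X * Y) = e11 X * e11 Y + e12 X * e21 Y" "e12 (X * Y) = e11 X * e12 Y + e12 X * e22 Y"
  "e21 (X * Y) = e21 X * e11 Y + e22 X * e21 Y" "e22 (X * Y) = e21 X * e12 Y + e22 X * e22 Y"
  by (simp_all add: times_m2_def)

lemma e_one: "e11 1 = 1" "e12 1 = 0" "e21 1 = 0" "e22 1 = 1"
  by (simp_all add: one_m2_def)

lemma e_zero: "e11 0 = 0" "e12 0 = 0" "e21 0 = 0" "e22 0 = 0"
  by (simp_all add: zero_m2_def)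

lemma e_minus: "e11 (X - Y) = e11 X - e11 Y" "e12 (X - Y) = e12 X - e12 Y"
  "e21 (X - Y) = e21 X - e21 Y" "e22 (X - Y) = e22 X - e22 Y"
  by (simp_all add: minus_m2_def)

lemma e_plus: "e11 (X + Y) = e11 X + e11 Y" "e12 (X + Y) = e12 X + e12 Y"
  "e21 (X + Y) = e21 X + e21 Y" "e22 (X + Y) = e22 X + e22 Y"
  by (simp_all add: plus_m2_def)

lemma e_uminus: "e11 (- X) = - e11 X" "e12 (- X) = - e12 X"
  "e21 (- X) = - e21 X" "e22 (- X) = - e22 X"
  by (simp_all add: uminus_m2_def)

lemmas e_simps = e_mult e_one e_zero e_minus e_plus e_uminus

lemma m2_eqI: "e11 X = e11 Y \<Longrightarrow> e12 X = e12 Y \<Longrightarrow> e21 X = e21 Y \<Longrightarrow> e22 X = e22 Y \<Longrightarrow> X = Y"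
  by (cases X; cases Y) auto

lemma mpow_W:
  fixes X :: "'a::ring_1 m2"
  defines "S \<equiv> {e11 X, e12 X, e21 X, e22 X}"
  shows "e11 (X^k) \<in> W S k \<and> e12 (X^k) \<in> W S k \<and> e21 (X^k) \<in> W S k \<and> e22 (X^k) \<in> W S k"
proof (induction k)
  case 0
  have "prod_list [] \<in> W S 0" by (rule W.Wword) auto
  then show ?case by (simp add: e_simps W.W0)
next
  case (Suc k)
  have s: "e11 X \<in> S" "e12 X \<in> S" "e21 X \<in> S" "e22 X \<in> S" by (auto simp: S_def)
  show ?case using Suc s by (simp add: e_simps W.Wadd W_mult)
qed

definition JM :: "'a::ring_1 m2 \<Rightarrow> bool" where
  "JM X \<longleftrightarrow> nilpotent (e11 X) \<and> nilpotent (e12 X) \<and> nilpotent (e21 X) \<and> nilpotent (e22 X)"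

lemma JM_nil:
  fixes X :: "'a::ring_1 m2"
  assumes tp: "two_primal TYPE('a)" and J: "JM X"
  shows "nilpotent X"
proof -
  define S where "S = {e11 X, e12 X, e21 X, e22 X}"
  have "finite S" "S \<subseteq> {x. nilpotent x}" using J by (auto simp: S_def JM_def)
  then obtain n where n: "\<forall>w. length w = n \<and> set w \<subseteq> S \<longrightarrow> prod_list w = 0"
    using two_primal_words[OF tp] by blast
  have "X^n = 0" using mpow_W[of X n] W_zero[OF _ n] unfolding S_def
    by (intro m2_eqI) (simp_all add: e_simps)
  then show ?thesis by (auto simp: nilpotent_def)
qed



lemma loc_idem:
  fixes e :: "'a::ring_1"
  assumes loc: "local_ring TYPE('a)" and ide: "idempotent e"
  shows "e = 0 \<or> e = 1"
proof -
  have I: "two_sided_ideal {a::'a. \<not> invertible a}" using loc by (simp add: local_ring_def)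
  have one: "invertible (1::'a)" by (auto simp: invertible_def)
  have ee: "e * e = e" using ide by (simp add: idempotent_def)
  show ?thesis
  proof (cases "invertible e")
    case True
    then obtain b where b: "e * b = 1" by (auto simp: invertible_def)
    have "e * e * b = e" by (simp add: mult.assoc b)
    moreover have "e * e * b = 1" using ee b by simp
    ultimately show ?thesis by simp
  next
    case False
    show ?thesis
    proof (cases "invertible (1 - e)")
      case True
      then obtain b where b: "b * (1 - e) = 1" by (auto simp: invertible_def)
      have "e = b * (1 - e) * e" using b by simp
      also have "\<dots> = b * (e - e * e)" by (simp add: mult.assoc algebra_simps)
      finally show ?thesis using ee by simp
    next
      case F2: False
      have "e + (1 - e) \<in> {a::'a. \<not> invertible a}" using I False F2
        unfolding two_sided_ideal_def by blast
      then show ?thesis using one by simp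
    qed
  qed
qed

lemma residue:
  fixes x :: "'a::ring_1"
  assumes loc: "local_ring TYPE('a)" and sw: "swnc_ring TYPE('a)"
  shows "\<exists>k::int. k \<in> {-1,0,1} \<and> nilpotent (x - of_int k)"
proof -
  obtain e q where eq: "idempotent e" "nilpotent q" "x = q + e \<or> x = q - e"
    using sw unfolding swnc_ring_def swnc_elem_def by blast
  have "e = 0 \<or> e = 1" using loc_idem[OF loc eq(1)] .
  then show ?thesis
  proof
    assume e0: "e = 0"
    then have "x = q" using eq(3) by auto
    then have "nilpotent (x - of_int 0)" using eq(2) by simp
    then show ?thesis by blast
  next
    assume e1: "e = 1"
    show ?thesis using eq(3)
    proof
      assume "x = q + e"
      then have "nilpotent (x - of_int 1)" using eq(2) e1 by simp
      then show ?thesis by blast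
    next
      assume "x = q - e"
      then have "nilpotent (x - of_int (-1))" using eq(2) e1 by simp
      then show ?thesis by blast
    qed
  qed
qed

lemma nil_iff:
  fixes x :: "'a::ring_1"
  assumes loc: "local_ring TYPE('a)" and sw: "swnc_ring TYPE('a)"
  shows "nilpotent x \<longleftrightarrow> \<not> invertible x"
proof
  assume "nilpotent x" then show "\<not> invertible x"
    using nil_not_inv loc by (auto simp: local_ring_def)
next
  assume ni: "\<not> invertible x"
  obtain k::int where k: "k \<in> {-1,0,1}" "nilpotent (x - of_int k)" using residue[OF loc sw] by blast
  show "nilpotent x"
  proof (cases "k = 0")
    case True then show ?thesis using k by simp
  next
    case False
    then have "k = 1 \<or> k = -1" using k by auto
    then show ?thesis
    proof
      assume "k = 1"
      then have "nilpotent (x - 1)" using k by simp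
      then have "invertible (1 + (x - 1))" by (rule nil_one_plus_inv)
      then show ?thesis using ni by simp
    next
      assume "k = -1"
      then have "nilpotent (x + 1)" using k by simp
      then have "invertible (1 - (x + 1))" by (rule nil_one_minus_inv)
      then have "invertible (- (1 - (x + 1)))" by (rule inv_neg)
      then show ?thesis using ni by simp
    qed
  qed
qed

lemma nil_ideal:
  assumes loc: "local_ring TYPE('a::ring_1)" and sw: "swnc_ring TYPE('a)"
  shows "two_sided_ideal {x::'a. nilpotent x}"
proof -
  have "{x::'a. nilpotent x} = {x. \<not> invertible x}" using nil_iff[OF loc sw] by blast
  then show ?thesis using loc by (simp add: local_ring_def)
qed

lemma cg3:
  fixes x1 y1 x2 y2 x3 y3 :: "'a::ring_1"
  assumes NI: "two_sided_ideal {x::'a. nilpotent x}"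
    and h: "nilpotent (x1 - of_int i1)" "nilpotent (y1 - of_int j1)"
      "nilpotent (x2 - of_int i2)" "nilpotent (y2 - of_int j2)"
      "nilpotent (x3 - of_int i3)" "nilpotent (y3 - of_int j3)"
      "nilpotent (of_int (i1*j1 + i2*j2 + i3*j3 - k) :: 'a)"
  shows "nilpotent (x1*y1 + x2*y2 + x3*y3 - of_int k)"
proof -
  have add: "nilpotent (u + v)" if "nilpotent u" "nilpotent v" for u v :: 'a
    using NI that unfolding two_sided_ideal_def by blast
  have ml: "nilpotent (r * u)" and mr: "nilpotent (u * r)" if "nilpotent u" for u r :: 'a
    using NI that unfolding two_sided_ideal_def by blast+
  have c1: "nilpotent (x * y - of_int i * of_int j)"
    if "nilpotent (x - of_int i)" "nilpotent (y - of_int j)" for x y :: 'a and i j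
  proof -
    have "x * y - of_int i * of_int j = (x - of_int i) * y + of_int i * (y - of_int j)"
      by (simp add: algebra_simps)
    then show ?thesis using that by (simp add: add ml mr)
  qed
  have eq: "x1*y1 + x2*y2 + x3*y3 - of_int k =
     (x1*y1 - of_int i1 * of_int j1) + (x2*y2 - of_int i2 * of_int j2) +
     (x3*y3 - of_int i3 * of_int j3) +
     (of_int i1 * of_int j1 + of_int i2 * of_int j2 + of_int i3 * of_int j3 - of_int k)"
    by (simp add: algebra_simps)
  have h7: "nilpotent (of_int i1 * of_int j1 + of_int i2 * of_int j2 + of_int i3 * of_int j3 - (of_int k::'a))"
    using h(7) by simp
  show ?thesis unfolding eq using h h7 by (intro add c1)
qed



lemma nil_neg: "nilpotent (x::'a::ring_1) \<Longrightarrow> nilpotent (- x)"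
  unfolding nilpotent_def by (metis power_minus mult_zero_right)

lemma nil_sq: "nilpotent ((x::'a::ring_1) * x) \<Longrightarrow> nilpotent x"
  unfolding nilpotent_def by (metis power_mult power2_eq_square)

theorem theorem2p38:
  assumes "two_primal TYPE('a::ring_1)"
    and "local_ring TYPE('a)"
    and "swnc_ring TYPE('a)"
  shows "gswnc_ring TYPE('a m2)"
  unfolding gswnc_ring_def
proof (intro allI impI)
  note tp = assms(1) and loc = assms(2) and sw = assms(3)
  have NI: "two_sided_ideal {x::'a. nilpotent x}" by (rule nil_ideal[OF loc sw])
  have z01: "(0::'a) \<noteq> 1" using loc by (simp add: local_ring_def)
  have n1: "\<not> nilpotent (1::'a)" using z01 by (auto simp: nilpotent_def)
  fix A :: "'a m2" assume ninv: "\<not> invertible A"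
  define a b c d where "a = e11 A" "b = e12 A" "c = e21 A" "d = e22 A"
  obtain \<alpha>::int where ha: "\<alpha> \<in> {-1,0,1}" "nilpotent (a - of_int \<alpha>)" using residue[OF loc sw] by blast
  obtain \<beta>::int where hb: "\<beta> \<in> {-1,0,1}" "nilpotent (b - of_int \<beta>)" using residue[OF loc sw] by blast
  obtain \<gamma>::int where hc: "\<gamma> \<in> {-1,0,1}" "nilpotent (c - of_int \<gamma>)" using residue[OF loc sw] by blast
  obtain \<delta>::int where hd: "\<delta> \<in> {-1,0,1}" "nilpotent (d - of_int \<delta>)" using residue[OF loc sw] by blast
  define D where "D = \<alpha> * \<delta> - \<beta> * \<gamma>"
  have z: "nilpotent ((of_int i::'a) - of_int i)" for i by (simp add: nilpotent_def exI[of _ 1])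
  have zz: "nilpotent ((0::'a) - of_int (0::int))" by (simp add: nilpotent_def exI[of _ 1])
  show "swnc_elem A"
  proof (cases "nilpotent (of_int D :: 'a)")
    case True
    define t where "t = \<alpha> + \<delta>"
    obtain \<tau>::int where ht: "\<tau> \<in> {-1,0,1}" "nilpotent (of_int t - of_int \<tau> :: 'a)"
      using residue[OF loc sw] by blast
    have ht': "nilpotent (of_int (-\<tau>) - of_int (-t) :: 'a)"
    proof -
      have "(of_int (-\<tau>) - of_int (-t) :: 'a) = of_int t - of_int \<tau>" by simp
      then show ?thesis using ht(2) by simp
    qed
    have mD: "nilpotent (of_int (-D) :: 'a)" using nil_neg[OF True] by simp
    have z0: "nilpotent (0::'a)" by (simp add: nilpotent_def exI[of _ 1])
    have E11: "nilpotent (a*a + b*c + of_int (-\<tau>) * a - of_int 0)"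
      by (rule cg3[OF NI ha(2) ha(2) hb(2) hc(2) ht' ha(2)])
         (use mD in \<open>simp add: D_def t_def algebra_simps\<close>)
    have E12: "nilpotent (a*b + b*d + of_int (-\<tau>) * b - of_int 0)"
      by (rule cg3[OF NI ha(2) hb(2) hb(2) hd(2) ht' hb(2)])
         (use z0 in \<open>simp add: D_def t_def algebra_simps\<close>)
    have E21: "nilpotent (c*a + d*c + of_int (-\<tau>) * c - of_int 0)"
      by (rule cg3[OF NI hc(2) ha(2) hd(2) hc(2) ht' hc(2)])
         (use z0 in \<open>simp add: D_def t_def algebra_simps\<close>)
    have E22: "nilpotent (c*b + d*d + of_int (-\<tau>) * d - of_int 0)"
      by (rule cg3[OF NI hc(2) hb(2) hd(2) hd(2) ht' hd(2)])
         (use mD in \<open>simp add: D_def t_def algebra_simps\<close>)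
    note Es = E11 E12 E21 E22
    have "\<tau> = 0 \<or> \<tau> = 1 \<or> \<tau> = -1" using ht(1) by auto
    then show ?thesis
    proof (elim disjE)
      assume "\<tau> = 0"
      then have "JM (A * A)" using Es by (simp add: JM_def e_simps a_b_c_d_def)
      then have "nilpotent A" using JM_nil[OF tp] nil_sq by blast
      then show ?thesis unfolding swnc_elem_def
        by (intro exI[of _ 0] exI[of _ A]) (simp add: idempotent_def)
    next
      assume "\<tau> = 1"
      then have "JM (A * A - A)" using Es by (simp add: JM_def e_simps a_b_c_d_def)
      then have "nilpotent (A * A - A)" using JM_nil[OF tp] by blast
      then obtain e where e: "idempotent e" "nilpotent (A - e)" "e * A = A * e"
        using lift_idem by blast
      have "e * (A - e) = (A - e) * e" using e(3) by (simp add: algebra_simps)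
      then show ?thesis unfolding swnc_elem_def using e
        by (intro exI[of _ e] exI[of _ "A - e"]) simp
    next
      assume "\<tau> = -1"
      then have "JM ((-A) * (-A) - (-A))" using Es by (simp add: JM_def e_simps a_b_c_d_def)
      then have "nilpotent ((-A) * (-A) - (-A))" using JM_nil[OF tp] by blast
      then obtain e where e: "idempotent e" "nilpotent (-A - e)" "e * (-A) = (-A) * e"
        using lift_idem by blast
      have q: "nilpotent (A + e)" using nil_neg[OF e(2)] by (simp add: add.commute)
      have "e * (A + e) = (A + e) * e" using e(3) by (simp add: algebra_simps)
      then show ?thesis unfolding swnc_elem_def using e q
        by (intro exI[of _ e] exI[of _ "A + e"]) simp
    qed
  next
    case False
    have cases: "D = 0 \<or> D * D - 1 = 0 \<or> (D * D - 1 = 3 \<and> (D = 2 \<or> D = -2))"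
      using ha(1) hb(1) hc(1) hd(1) by (auto simp: D_def)
    have D2: "nilpotent (of_int (D * D - 1) :: 'a)"
    proof -
      { assume "D = 0" then have False using False by (simp add: nilpotent_def exI[of _ 1]) }
      moreover
      { assume "D * D - 1 = 0" then have ?thesis by (simp add: nilpotent_def exI[of _ 1]) }
      moreover
      { assume h3: "D * D - 1 = 3 \<and> (D = 2 \<or> D = -2)"
        have n2: "\<not> nilpotent (2::'a)"
        proof
          assume "nilpotent (2::'a)"
          then have "nilpotent (of_int D :: 'a)" using h3 nil_neg[of "2::'a"] by auto
          then show False using False by simp
        qed
        obtain k::int where k: "k \<in> {-1,0,1}" "nilpotent ((2::'a) - of_int k)"
          using residue[OF loc sw] by blast
        have "k = -1" using k n2 n1 by auto
        then have "nilpotent (3::'a)" using k by simp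
        then have ?thesis using h3 by simp }
      ultimately show ?thesis using cases by blast
    qed
    define B :: "'a m2" where "B = M2 (of_int (D*\<delta>)) (of_int (-D*\<beta>)) (of_int (-D*\<gamma>)) (of_int (D*\<alpha>))"
    have AB: "JM (A * B - 1)"
    proof -
      have "nilpotent (a * of_int (D*\<delta>) + b * of_int (-D*\<gamma>) + 0 * 0 - of_int 1)"
        by (rule cg3[OF NI ha(2) z hb(2) z zz zz]) (use D2 in \<open>simp add: D_def algebra_simps\<close>)
      moreover have "nilpotent (a * of_int (-D*\<beta>) + b * of_int (D*\<alpha>) + 0 * 0 - of_int 0)"
        by (rule cg3[OF NI ha(2) z hb(2) z zz zz]) (simp add: D_def algebra_simps nilpotent_def exI[of _ 1])
      moreover have "nilpotent (c * of_int (D*\<delta>) + d * of_int (-D*\<gamma>) + 0 * 0 - of_int 0)"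
        by (rule cg3[OF NI hc(2) z hd(2) z zz zz]) (simp add: D_def algebra_simps nilpotent_def exI[of _ 1])
      moreover have "nilpotent (c * of_int (-D*\<beta>) + d * of_int (D*\<alpha>) + 0 * 0 - of_int 1)"
        by (rule cg3[OF NI hc(2) z hd(2) z zz zz]) (use D2 in \<open>simp add: D_def algebra_simps\<close>)
      ultimately show ?thesis by (simp add: JM_def e_simps a_b_c_d_def B_def)
    qed
    have BA: "JM (B * A - 1)"
    proof -
      have "nilpotent (of_int (D*\<delta>) * a + of_int (-D*\<beta>) * c + 0 * 0 - of_int 1)"
        by (rule cg3[OF NI z ha(2) z hc(2) zz zz]) (use D2 in \<open>simp add: D_def algebra_simps\<close>)
      moreover have "nilpotent (of_int (D*\<delta>) * b + of_int (-D*\<beta>) * d + 0 * 0 - of_int 0)"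
        by (rule cg3[OF NI z hb(2) z hd(2) zz zz]) (simp add: D_def algebra_simps nilpotent_def exI[of _ 1])
      moreover have "nilpotent (of_int (-D*\<gamma>) * a + of_int (D*\<alpha>) * c + 0 * 0 - of_int 0)"
        by (rule cg3[OF NI z ha(2) z hc(2) zz zz]) (simp add: D_def algebra_simps nilpotent_def exI[of _ 1])
      moreover have "nilpotent (of_int (-D*\<gamma>) * b + of_int (D*\<alpha>) * d + 0 * 0 - of_int 1)"
        by (rule cg3[OF NI z hb(2) z hd(2) zz zz]) (use D2 in \<open>simp add: D_def algebra_simps\<close>)
      ultimately show ?thesis by (simp add: JM_def e_simps a_b_c_d_def B_def)
    qed
    have "invertible (1 + (A * B - 1))" using nil_one_plus_inv JM_nil[OF tp AB] by blast
    moreover have "invertible (1 + (B * A - 1))" using nil_one_plus_inv JM_nil[OF tp BA] by blast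
    ultimately have "invertible A" using lr_inv by simp
    then show ?thesis using ninv by blast
  qed
qed

end
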